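(* Let $m\ge1$, let ${\bf d}^m=(d_1,\dots,d_m)$ be positive integers, and let $j\ge2$ be an integer, with the $d_i$ ordered so that $d_1,\dots,d_{k_j}$ are exactly those divisible by $j$ ($0\le k_j\le m$). Put $s_m=\sum_{i=1}^m d_i$, $\pi_m=\prod_{i=1}^m d_i$ and ${\bf d}^m_j=(d_1,\dots,d_{k_j},\,jd_{k_j+1},\dots,jd_m)$. Then for every $s$, $$\frac{j^{k_j-m}}{(m-1)!\,\pi_m}\sum_{r_{k_j+1}=0}^{j-1}\cdots\sum_{r_m=0}^{j-1} B^{(m)}_{m-1}\Big(s+s_m+\sum_{i=k_j+1}^m r_id_i,\ {\bf d}^m_j\Big)=\frac{1}{(m-1)!\,\pi_m}B^{(m)}_{m-1}\big(s+s_m,{\bf d}^m\big),$$ and the right-hand side equals the polynomial part $W_1(s,{\bf d}^m)$ of the restricted partition function.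
   Context: For an integer $q\ge1$ and nonzero numbers ${\bf e}=(e_1,\dots,e_q)$, the Bernoulli polynomials of higher order $B^{(q)}_n(x,{\bf e})$ are defined by $$\frac{e^{xt}\,t^q\prod_{i=1}^q e_i}{\prod_{i=1}^q (e^{e_it}-1)}=\sum_{n=0}^\infty B^{(q)}_n(x,{\bf e})\frac{t^n}{n!}.$$ $W_1(s,{\bf d}^m)$ denotes the first Sylvester wave, i.e. the coefficient of $t^{-1}$ in the Laurent expansion in $t$ of $e^{st}/\prod_{k=1}^m(1-e^{-d_kt})$; it is known to equal $\frac{1}{(m-1)!\,\pi_m}B^{(m)}_{m-1}(s+s_m,{\bf d}^m)$. *)

theory Defs
  imports "HOL-Computational_Algebra.Formal_Power_Series" "HOL-Computational_Algebra.Formal_Laurent_Series"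
begin

text \<open>Higher-order Bernoulli polynomial B^(q)_n(x, e) with parameters e 1, ..., e q,
  defined through its exponential generating function
  e^(xt) t^q prod e_i / prod (e^(e_i t) - 1)
  = e^(xt) / prod_i ((e^(e_i t) - 1) / (e_i t)),
  taken as a formal power series in t.\<close>
definition bernoulli_higher :: "nat \<Rightarrow> (nat \<Rightarrow> real) \<Rightarrow> nat \<Rightarrow> real \<Rightarrow> real" where
  "bernoulli_higher q e n x =
     fact n * fps_nth
       (fps_exp x * inverse (\<Prod>i\<in>{1..q}. fps_const (1 / e i) * fps_shift 1 (fps_exp (e i) - 1))) n"

definition sylvester_wave1 :: "real \<Rightarrow> (nat \<Rightarrow> nat) \<Rightarrow> nat \<Rightarrow> real" where
  "sylvester_wave1 s d m =
     fls_nth (fps_to_fls (fps_exp s) *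
              inverse (\<Prod>k\<in>{1..m}. fps_to_fls (1 - fps_exp (- real (d k))))) (-1)"

end

theory Submission
  imports Defs "HOL-Library.FuncSet"
begin

definition Q :: "real \<Rightarrow> real fps" where
  "Q c = fps_const (1 / c) * fps_shift 1 (fps_exp c - 1)"

lemma XQ: "c \<noteq> 0 \<Longrightarrow> fps_X * Q c = fps_const (1/c) * (fps_exp c - 1)"
  unfolding Q_def by (intro fps_ext) simp

lemma Q0: "c \<noteq> 0 \<Longrightarrow> Q c $ 0 = 1"
  unfolding Q_def by simp

lemma X_cancel: "fps_X * (f::real fps) = fps_X * g \<Longrightarrow> f = g"
  by (metis fps_shift_times_fps_X' mult.commute)

lemma geom: "c \<noteq> 0 \<Longrightarrow> (j::nat) > 0 \<Longrightarrow>
  (\<Sum>r<j. fps_exp (real r * c)) * Q c = fps_const (real j) * Q (real j * c)"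
proof -
  assume c: "c \<noteq> 0" and j: "j > 0"
  have 1: "(\<Sum>r<j. fps_exp (real r * c)) * (fps_exp c - 1) = fps_exp (real j * c) - 1"
    using power_diff_sumr2[of "fps_exp c" j 1]
    by (simp add: fps_exp_power_mult mult.commute)
  have jc: "real j * c \<noteq> 0" using c j by simp
  have "fps_X * ((\<Sum>r<j. fps_exp (real r * c)) * Q c) = (\<Sum>r<j. fps_exp (real r * c)) * (fps_X * Q c)"
    by (simp add: algebra_simps)
  also have "\<dots> = fps_const (1/c) * ((\<Sum>r<j. fps_exp (real r * c)) * (fps_exp c - 1))"
    using c by (simp add: XQ algebra_simps)
  also have "\<dots> = fps_const (1/c) * (fps_exp (real j * c) - 1)" using 1 by simp
  also have "\<dots> = fps_const (real j) * (fps_const (1 / (real j * c)) * (fps_exp (real j * c) - 1))"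
    using j by (simp add: mult.assoc[symmetric] fps_const_mult)
  also have "\<dots> = fps_X * (fps_const (real j) * Q (real j * c))"
    using XQ[OF jc] by (metis mult.left_commute)
  finally have "fps_X * ((\<Sum>r<j. fps_exp (real r * c)) * Q c) = fps_X * (fps_const (real j) * Q (real j * c))" .
  thus ?thesis by (rule X_cancel)
qed


lemma exp_sum: "finite A \<Longrightarrow> fps_exp (\<Sum>i\<in>A. f i) = (\<Prod>i\<in>A. fps_exp (f i :: real))"
  by (induction A rule: finite_induct) (simp_all add: fps_exp_add_mult)

lemma prod_nth0: "(\<Prod>i\<in>A. (f i :: real fps)) $ 0 = (\<Prod>i\<in>A. f i $ 0)"
  by (induction A rule: infinite_finite_induct) simp_all

lemma PQ0: "(\<And>i. i \<in> A \<Longrightarrow> e i \<noteq> 0) \<Longrightarrow> (\<Prod>i\<in>A. Q (e i)) $ 0 = 1"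
  by (simp add: prod_nth0 Q0)

lemma const_prod: "fps_const (\<Prod>i\<in>A. (f i :: real)) = (\<Prod>i\<in>A. fps_const (f i))"
proof (induction A rule: infinite_finite_induct)
  case (insert a A)
  then show ?case by (metis fps_const_mult prod.insert)
qed simp_all

lemma to_fls_prod: "fps_to_fls (\<Prod>i\<in>A. (f i :: real fps)) = (\<Prod>i\<in>A. fps_to_fls (f i))"
  by (induction A rule: infinite_finite_induct) (simp_all add: fls_times_fps_to_fls)

lemma bh_Q: "bernoulli_higher q e n x = fact n * (fps_exp x * inverse (\<Prod>i\<in>{1..q}. Q (e i))) $ n"
  by (simp add: bernoulli_higher_def Q_def)

lemma sumA:
  assumes "finite K"
  shows "(\<Sum>r\<in>Pi\<^sub>E K (\<lambda>_. {..<j}). fps_exp (x + (\<Sum>i\<in>K. real (r i) * c i)))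
     = fps_exp x * (\<Prod>i\<in>K. \<Sum>r<j. fps_exp (real r * c i))"
proof -
  have "(\<Sum>r\<in>Pi\<^sub>E K (\<lambda>_. {..<j}). fps_exp (x + (\<Sum>i\<in>K. real (r i) * c i)))
     = (\<Sum>r\<in>Pi\<^sub>E K (\<lambda>_. {..<j}). fps_exp x * (\<Prod>i\<in>K. fps_exp (real (r i) * c i)))"
    using assms by (simp add: fps_exp_add_mult exp_sum)
  also have "\<dots> = fps_exp x * (\<Sum>r\<in>Pi\<^sub>E K (\<lambda>_. {..<j}). (\<Prod>i\<in>K. fps_exp (real (r i) * c i)))"
    by (simp add: sum_distrib_left)
  also have "\<dots> = fps_exp x * (\<Prod>i\<in>K. \<Sum>r<j. fps_exp (real r * c i))"
    using prod_sum_PiE[of K "\<lambda>_. {..<j}" "\<lambda>i r. fps_exp (real r * c i)"] assms by simp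
  finally show ?thesis .
qed

lemma prodB:
  assumes "finite K" "\<And>i. i \<in> K \<Longrightarrow> c i \<noteq> 0" "j > 0"
  shows "(\<Prod>i\<in>K. \<Sum>r<j. fps_exp (real r * c i)) * (\<Prod>i\<in>K. Q (c i))
     = fps_const (real j ^ card K) * (\<Prod>i\<in>K. Q (real j * c i))"
proof -
  have "(\<Prod>i\<in>K. \<Sum>r<j. fps_exp (real r * c i)) * (\<Prod>i\<in>K. Q (c i))
     = (\<Prod>i\<in>K. (\<Sum>r<j. fps_exp (real r * c i)) * Q (c i))"
    by (simp add: prod.distrib)
  also have "\<dots> = (\<Prod>i\<in>K. fps_const (real j) * Q (real j * c i))"
    using assms by (intro prod.cong refl geom) auto
  also have "\<dots> = fps_const (real j ^ card K) * (\<Prod>i\<in>K. Q (real j * c i))"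
    by (simp add: prod.distrib)
  finally show ?thesis .
qed

lemma one_minus_exp: "c \<noteq> 0 \<Longrightarrow> 1 - fps_exp (- c) = fps_X * (fps_exp (-c) * fps_const c * Q c)"
proof -
  assume c: "c \<noteq> 0"
  have "fps_X * (fps_exp (-c) * fps_const c * Q c) = fps_exp (-c) * fps_const c * (fps_X * Q c)"
    by (simp add: algebra_simps)
  also have "\<dots> = fps_exp (-c) * (fps_exp c - 1)"
    using c by (simp add: XQ mult.assoc[symmetric] fps_const_mult)
  also have "\<dots> = 1 - fps_exp (- c)"
    by (simp add: algebra_simps flip: fps_exp_add_mult)
  finally show ?thesis by simp
qed

theorem mainTheorem3:
  fixes m j k :: nat and d :: "nat \<Rightarrow> nat" and s :: real
  assumes "m \<ge> 1" and "\<forall>i\<in>{1..m}. d i > 0" and "j \<ge> 2" and "k \<le> m"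
    and "\<forall>i\<in>{1..k}. j dvd d i" and "\<forall>i\<in>{k+1..m}. \<not> j dvd d i"
  shows "(let sm = real (\<Sum>i\<in>{1..m}. d i); pim = real (\<Prod>i\<in>{1..m}. d i);
              dj = (\<lambda>i. if i \<le> k then real (d i) else real j * real (d i))
          in 1 / (real j ^ (m - k) * fact (m - 1) * pim) *
               (\<Sum>r\<in>Pi\<^sub>E {k+1..m} (\<lambda>_. {..<j}).
                  bernoulli_higher m dj (m - 1) (s + sm + (\<Sum>i\<in>{k+1..m}. real (r i) * real (d i))))
             = 1 / (fact (m - 1) * pim) * bernoulli_higher m (\<lambda>i. real (d i)) (m - 1) (s + sm)
           \<and> 1 / (fact (m - 1) * pim) * bernoulli_higher m (\<lambda>i. real (d i)) (m - 1) (s + sm)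
             = sylvester_wave1 s d m)"
proof -
  define sm where "sm = real (\<Sum>i\<in>{1..m}. d i)"
  define pim where "pim = real (\<Prod>i\<in>{1..m}. d i)"
  define dj where "dj = (\<lambda>i. if i \<le> k then real (d i) else real j * real (d i))"
  define dd where "dd = (\<lambda>i. real (d i))"
  define K where "K = {k+1..m}"
  define I1 where "I1 = {1..k}"
  define x where "x = s + sm"
  define Pd where "Pd = (\<Prod>i\<in>{1..m}. Q (dd i))"
  define Pj where "Pj = (\<Prod>i\<in>{1..m}. Q (dj i))"
  define cj where "cj = real j ^ (m - k)"
  have dpos: "\<And>i. i \<in> {1..m} \<Longrightarrow> dd i \<noteq> 0" using assms(2) by (simp add: dd_def)
  have djpos: "\<And>i. i \<in> {1..m} \<Longrightarrow> dj i \<noteq> 0" using assms(2,3) by (simp add: dj_def)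
  have pim0: "pim \<noteq> 0" using assms(2) by (simp add: pim_def)
  have cj0: "cj \<noteq> 0" using assms(3) by (simp add: cj_def)
  have split: "{1..m} = I1 \<union> K" "I1 \<inter> K = {}" using assms(4) by (auto simp: I1_def K_def)
  have Pd0: "Pd $ 0 = 1" unfolding Pd_def using dpos by (rule PQ0)
  have Pj0: "Pj $ 0 = 1" unfolding Pj_def using djpos by (rule PQ0)
  have Pd_split: "Pd = (\<Prod>i\<in>I1. Q (dd i)) * (\<Prod>i\<in>K. Q (dd i))"
    unfolding Pd_def split(1) by (rule prod.union_disjoint) (use split in \<open>auto simp: I1_def K_def\<close>)
  have "Pj = (\<Prod>i\<in>I1. Q (dj i)) * (\<Prod>i\<in>K. Q (dj i))"
    unfolding Pj_def split(1) by (rule prod.union_disjoint) (use split in \<open>auto simp: I1_def K_def\<close>)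
  also have "(\<Prod>i\<in>I1. Q (dj i)) = (\<Prod>i\<in>I1. Q (dd i))"
    by (rule prod.cong) (auto simp: I1_def dj_def dd_def)
  also have "(\<Prod>i\<in>K. Q (dj i)) = (\<Prod>i\<in>K. Q (real j * dd i))"
    by (rule prod.cong) (auto simp: K_def dj_def dd_def)
  finally have Pj_split: "Pj = (\<Prod>i\<in>I1. Q (dd i)) * (\<Prod>i\<in>K. Q (real j * dd i))" .
  define S where "S = (\<Prod>i\<in>K. \<Sum>r<j. fps_exp (real r * dd i))"
  have cardK: "card K = m - k" by (simp add: K_def)
  have SK: "S * (\<Prod>i\<in>K. Q (dd i)) = fps_const cj * (\<Prod>i\<in>K. Q (real j * dd i))"
    unfolding S_def cj_def cardK[symmetric]
    by (rule prodB) (use dpos assms(3,4) in \<open>auto simp: K_def\<close>)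
  have SPd: "S * Pd = fps_const cj * Pj"
    unfolding Pd_split Pj_split using SK by (simp add: algebra_simps)
  have "S = S * Pd * inverse Pd" using Pd0 by (simp add: mult.assoc inverse_mult_eq_1')
  also have "\<dots> = fps_const cj * Pj * inverse Pd" by (simp add: SPd)
  finally have "S * inverse Pj = fps_const cj * inverse Pd * (Pj * inverse Pj)"
    by (metis mult.assoc mult.commute)
  hence SinvPj: "S * inverse Pj = fps_const cj * inverse Pd" using Pj0 by (simp add: inverse_mult_eq_1')
  have sumE: "(\<Sum>r\<in>Pi\<^sub>E K (\<lambda>_. {..<j}). fps_exp (x + (\<Sum>i\<in>K. real (r i) * dd i))) = fps_exp x * S"
    unfolding S_def by (rule sumA) (simp add: K_def)
  have "(\<Sum>r\<in>Pi\<^sub>E K (\<lambda>_. {..<j}). bernoulli_higher m dj (m - 1) (x + (\<Sum>i\<in>K. real (r i) * real (d i))))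
      = fact (m-1) * ((\<Sum>r\<in>Pi\<^sub>E K (\<lambda>_. {..<j}). fps_exp (x + (\<Sum>i\<in>K. real (r i) * dd i))) * inverse Pj) $ (m-1)"
    by (simp add: bh_Q Pj_def dd_def fps_sum_nth sum_distrib_left sum_distrib_right)
  also have "\<dots> = fact (m-1) * (fps_const cj * (fps_exp x * inverse Pd)) $ (m-1)"
    unfolding sumE by (metis SinvPj mult.assoc mult.left_commute)
  also have "\<dots> = cj * bernoulli_higher m dd (m - 1) x"
    by (simp add: bh_Q Pd_def)
  finally have part1: "(\<Sum>r\<in>Pi\<^sub>E K (\<lambda>_. {..<j}). bernoulli_higher m dj (m - 1) (x + (\<Sum>i\<in>K. real (r i) * real (d i))))
      = cj * bernoulli_higher m dd (m - 1) x" .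
  define C where "C = fps_exp (- sm) * fps_const pim * Pd"
  have "(\<Prod>i\<in>{1..m}. 1 - fps_exp (- dd i)) = (\<Prod>i\<in>{1..m}. fps_X * (fps_exp (- dd i) * fps_const (dd i) * Q (dd i)))"
    using dpos by (intro prod.cong refl one_minus_exp) auto
  also have "\<dots> = fps_X ^ m * C"
    by (simp add: prod.distrib C_def Pd_def sm_def pim_def dd_def exp_sum const_prod
         flip: sum_negf)
  finally have prodC: "(\<Prod>i\<in>{1..m}. 1 - fps_exp (- dd i)) = fps_X ^ m * C" .
  have C0: "C $ 0 = pim" by (simp add: C_def Pd0)
  have invX: "inverse (fls_X ^ m :: real fls) = fls_shift (int m) 1"
    by (rule inverse_unique) (simp add: fls_X_power_conv_shift_1 fls_times_both_shifted_simp)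
  have "inverse (\<Prod>i\<in>{1..m}. fps_to_fls (1 - fps_exp (- real (d i))))
        = fls_shift (int m) 1 * fps_to_fls (inverse C)"
  proof -
    have "(\<Prod>i\<in>{1..m}. fps_to_fls (1 - fps_exp (- real (d i)))) = fps_to_fls (fps_X ^ m * C)"
      using prodC unfolding to_fls_prod[symmetric] dd_def by simp
    also have "\<dots> = fls_X ^ m * fps_to_fls C"
      by (simp add: fls_times_fps_to_fls fps_to_fls_power)
    finally have e: "(\<Prod>i\<in>{1..m}. fps_to_fls (1 - fps_exp (- real (d i)))) = fls_X ^ m * fps_to_fls C" .
    have "inverse (fps_to_fls C) = fps_to_fls (inverse C)"
      using C0 pim0 by (intro fls_inverse_fps_to_fls) simp
    thus ?thesis unfolding e by (simp add: inverse_mult_distrib invX)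
  qed
  hence W: "sylvester_wave1 s d m = (fps_exp s * inverse C) $ (m - 1)"
    using assms(1)
    by (simp add: sylvester_wave1_def fls_shifted_times_simps flip: fls_times_fps_to_fls)
      (metis nat_diff_distrib' nat_int nat_one_as_int of_nat_0_le_iff zero_le_one One_nat_def)
  have "inverse C = fps_const (1/pim) * (fps_exp sm * inverse Pd)"
    by (simp add: C_def fps_inverse_mult fps_exp_neg fps_const_inverse divide_inverse)
  hence "sylvester_wave1 s d m = 1 / pim * (fps_exp x * inverse Pd) $ (m - 1)"
  proof -
    assume h: "inverse C = fps_const (1/pim) * (fps_exp sm * inverse Pd)"
    have "fps_exp s * inverse C = fps_const (1/pim) * (fps_exp x * inverse Pd)"
      unfolding h x_def fps_exp_add_mult by (simp only: mult_ac)
    thus ?thesis unfolding W by (simp only: fps_mult_left_const_nth)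
  qed
  also have "\<dots> = 1 / (fact (m - 1) * pim) * bernoulli_higher m dd (m - 1) x"
    by (simp add: bh_Q Pd_def)
  finally have part2: "1 / (fact (m - 1) * pim) * bernoulli_higher m dd (m - 1) x = sylvester_wave1 s d m" ..
  show ?thesis
    unfolding Let_def sm_def[symmetric] pim_def[symmetric] dj_def[symmetric] x_def[symmetric]
      K_def[symmetric] cj_def[symmetric] dd_def[symmetric]
    using part1 part2 cj0 by simp
qed

end
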